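(* Let $G$ be the final graph of the uncoordinated construction (described in the context) on a set $P\subset\mathbb{R}^d$ of $n$ points with parameter $s>1$. Then $G$ is a spanner with stretch factor $(s+1)/(s-1)$ (for all $p,q\in P$ the shortest path length in $G$, with edges weighted by Euclidean length, is at most $\frac{s+1}{s-1}|pq|$) and $G$ has $O(n s^d)$ edges, where the implied constant depends only on $d$.
   Context: Fix $d\ge 1$; $|xy|$ is Euclidean distance. Uncoordinated construction: start with the graph $G$ on vertex set $P$ with no edges. Every ordered pair $(p,q)$ of distinct points of $P$ is processed exactly once, in an arbitrary order, one at a time. When $(p,q)$ is processed, the edge $pq$ is added to $G$ unless $G$ currently contains an edge whose endpoints can be labeled $p',q'$ with $|pp'|\le |p'q'|/(2s+2)$ and $|qq'|\le |p'q'|/(2s+2)$. $G$ is the graph after all pairs are processed. *)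

theory Defs
  imports "HOL-Analysis.Analysis"
begin

text \<open>Undirected graphs on points are represented by their edge sets, each edge
  being the doubleton set of its two endpoints.\<close>

definition covered :: "real \<Rightarrow> 'a::euclidean_space set set \<Rightarrow> 'a \<Rightarrow> 'a \<Rightarrow> bool" where
  "covered s E p q \<longleftrightarrow> (\<exists>p' q'. {p', q'} \<in> E \<and>
      dist p p' \<le> dist p' q' / (2 * s + 2) \<and> dist q q' \<le> dist p' q' / (2 * s + 2))"

definition process_pair :: "real \<Rightarrow> 'a::euclidean_space set set \<Rightarrow> 'a \<times> 'a \<Rightarrow> 'a set set" where
  "process_pair s E pq = (if covered s E (fst pq) (snd pq) then E else insert {fst pq, snd pq} E)"

definition uncoordinated_graph :: "real \<Rightarrow> ('a::euclidean_space \<times> 'a) list \<Rightarrow> 'a set set" where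
  "uncoordinated_graph s pairs = foldl (process_pair s) {} pairs"

definition valid_order :: "'a set \<Rightarrow> ('a \<times> 'a) list \<Rightarrow> bool" where
  "valid_order P pairs \<longleftrightarrow> distinct pairs \<and> set pairs = {(p, q). p \<in> P \<and> q \<in> P \<and> p \<noteq> q}"

definition is_walk :: "'a set set \<Rightarrow> 'a list \<Rightarrow> 'a \<Rightarrow> 'a \<Rightarrow> bool" where
  "is_walk E xs p q \<longleftrightarrow> xs \<noteq> [] \<and> hd xs = p \<and> last xs = q \<and>
      (\<forall>(a, b) \<in> set (zip xs (tl xs)). {a, b} \<in> E)"

definition walk_length :: "'a::metric_space list \<Rightarrow> real" where
  "walk_length xs = sum_list (map (\<lambda>(a, b). dist a b) (zip xs (tl xs)))"

end

theory Submission
  imports Defs "HOL-Library.FuncSet"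
begin


definition good :: "real \<Rightarrow> 'a::euclidean_space set set \<Rightarrow> bool" where
  "good s E \<longleftrightarrow> (\<forall>p q p' q'. {p,q} \<in> E \<longrightarrow> {p',q'} \<in> E \<longrightarrow> {p,q} \<noteq> {p',q'} \<longrightarrow>
     \<not> (dist p p' \<le> min (dist p q) (dist p' q') / (2 * s + 2) \<and> dist q q' \<le> min (dist p q) (dist p' q') / (2 * s + 2)))"

definition edges_in :: "'a set \<Rightarrow> 'a set set \<Rightarrow> bool" where
  "edges_in P E \<longleftrightarrow> (\<forall>e\<in>E. \<exists>p q. e = {p,q} \<and> p \<in> P \<and> q \<in> P \<and> p \<noteq> q)"

lemma covered_mono: "covered s E p q \<Longrightarrow> E \<subseteq> E' \<Longrightarrow> covered s E' p q"
  unfolding covered_def by blast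

lemma process_mono: "E \<subseteq> process_pair s E pq"
  unfolding process_pair_def by auto

lemma foldl_mono: "E \<subseteq> foldl (process_pair s) E xs"
proof (induction xs arbitrary: E)
  case Nil then show ?case by simp
next
  case (Cons x xs) then show ?case using process_mono[of E s x] by (metis foldl_Cons order_trans)
qed

lemma foldl_cov:
  "\<forall>(p,q)\<in>set xs. {p,q} \<in> foldl (process_pair s) E xs \<or> covered s (foldl (process_pair s) E xs) p q"
proof (induction xs arbitrary: E)
  case Nil then show ?case by simp
next
  case (Cons x xs)
  obtain p q where x: "x = (p,q)" by (cases x)
  let ?E1 = "process_pair s E x"
  have "{p,q} \<in> ?E1 \<or> covered s ?E1 p q"
    unfolding x process_pair_def using covered_mono[of s E p q] by auto
  then have "{p,q} \<in> foldl (process_pair s) ?E1 xs \<or> covered s (foldl (process_pair s) ?E1 xs) p q"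
    using foldl_mono[of ?E1 s xs] covered_mono by blast
  then show ?case using Cons.IH[of ?E1] x by auto
qed

lemma good_insert:
  assumes g: "good s E" and nc: "\<not> covered s E a b" and s: "s > 1"
  shows "good s (insert {a,b} E)"
proof -
  have c: "2 * s + 2 > 0" using s by simp
  have key: False if "{p',q'} \<in> E" "dist a p' \<le> min (dist a b) (dist p' q') / (2 * s + 2)"
     "dist b q' \<le> min (dist a b) (dist p' q') / (2 * s + 2)" for p' q'
  proof -
    have "min (dist a b) (dist p' q') / (2 * s + 2) \<le> dist p' q' / (2 * s + 2)"
      using c by (simp add: divide_right_mono)
    then show False using nc that unfolding covered_def by (meson order_trans)
  qed
  show ?thesis unfolding good_def
  proof (intro allI impI notI)
    fix p q p' q'
    assume h: "{p,q} \<in> insert {a,b} E" "{p',q'} \<in> insert {a,b} E" "{p,q} \<noteq> {p',q'}"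
      and d: "dist p p' \<le> min (dist p q) (dist p' q') / (2 * s + 2) \<and> dist q q' \<le> min (dist p q) (dist p' q') / (2 * s + 2)"
    consider "{p,q} = {a,b}" "{p',q'} \<in> E" | "{p',q'} = {a,b}" "{p,q} \<in> E" | "{p,q} \<in> E" "{p',q'} \<in> E"
      using h by auto
    then show False
    proof cases
      case 1
      then have "(p = a \<and> q = b) \<or> (p = b \<and> q = a)" by (auto simp: doubleton_eq_iff)
      then show False
      proof
        assume "p = a \<and> q = b" then show False using key[of p' q'] 1 d by auto
      next
        assume pq: "p = b \<and> q = a"
        have "{q',p'} \<in> E" using 1 by (simp add: insert_commute)
        then show False using key[of q' p'] pq d by (auto simp: dist_commute min.commute)
      qed
    next
      case 2
      then have "(p' = a \<and> q' = b) \<or> (p' = b \<and> q' = a)" by (auto simp: doubleton_eq_iff)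
      then show False
      proof
        assume "p' = a \<and> q' = b" then show False using key[of p q] 2 d by (auto simp: dist_commute min.commute)
      next
        assume pq: "p' = b \<and> q' = a"
        have "{q,p} \<in> E" using 2 by (simp add: insert_commute)
        then show False using key[of q p] pq d by (auto simp: dist_commute min.commute)
      qed
    next
      case 3 then show False using g h d unfolding good_def by blast
    qed
  qed
qed

lemma foldl_inv:
  assumes "good s E" "edges_in P E" "s > 1"
    "\<forall>(p,q)\<in>set xs. p \<in> P \<and> q \<in> P \<and> p \<noteq> q"
  shows "good s (foldl (process_pair s) E xs) \<and> edges_in P (foldl (process_pair s) E xs)"
  using assms
proof (induction xs arbitrary: E)
  case Nil then show ?case by simp
next
  case (Cons x xs)
  obtain p q where x: "x = (p,q)" by (cases x)
  have pq: "p \<in> P" "q \<in> P" "p \<noteq> q" using Cons.prems(4) x by auto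
  have "good s (process_pair s E x) \<and> edges_in P (process_pair s E x)"
    unfolding x process_pair_def using good_insert[of s E p q] Cons.prems pq
    by (auto simp: edges_in_def)
  then show ?case using Cons.IH Cons.prems by auto
qed



lemma zip_tl_append:
  "xs \<noteq> [] \<Longrightarrow> ys \<noteq> [] \<Longrightarrow>
   zip (xs @ ys) (tl (xs @ ys)) = zip xs (tl xs) @ (last xs, hd ys) # zip ys (tl ys)"
proof (induction xs)
  case Nil then show ?case by simp
next
  case (Cons x xs)
  show ?case
  proof (cases "xs = []")
    case True then show ?thesis using Cons.prems by (cases ys) auto
  next
    case False
    then obtain y zs where "xs = y # zs" by (cases xs) auto
    then show ?thesis using Cons.IH[OF False Cons.prems(2)] False by auto
  qed
qed

lemma walk_single: "is_walk E [p] p p" "walk_length [p] = 0"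
  by (auto simp: is_walk_def walk_length_def)

lemma walk_edge: "{p,q} \<in> E \<Longrightarrow> is_walk E [p,q] p q" "walk_length [p,q] = dist p q"
  by (auto simp: is_walk_def walk_length_def)

lemma walk_append:
  assumes "is_walk E xs a b" "is_walk E ys c d" "{b,c} \<in> E"
  shows "is_walk E (xs @ ys) a d \<and> walk_length (xs @ ys) = walk_length xs + dist b c + walk_length ys"
proof -
  have ne: "xs \<noteq> []" "ys \<noteq> []" using assms by (auto simp: is_walk_def)
  have z: "zip (xs @ ys) (tl (xs @ ys)) = zip xs (tl xs) @ (b, c) # zip ys (tl ys)"
    using zip_tl_append[OF ne] assms by (auto simp: is_walk_def)
  show ?thesis using assms ne unfolding is_walk_def walk_length_def z by auto
qed

lemma arith1:
  fixes x D L s :: real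
  assumes "s > 1" "x \<ge> 0" "D > 0" "x * (2 * s + 2) \<le> L" "L * s \<le> D * (s + 1)"
  shows "x < D"
proof (rule ccontr)
  assume "\<not> x < D"
  then have xD: "D \<le> x" by simp
  have "x * (2 * s + 2) * s \<le> L * s" using assms by (simp add: mult_right_mono)
  also have "\<dots> \<le> D * (s + 1)" by (rule assms(5))
  finally have "(2 * x * s) * (s + 1) \<le> D * (s + 1)" by (simp add: algebra_simps)
  then have a: "2 * x * s \<le> D" using assms(1) mult_le_cancel_right[of "2 * x * s" "s + 1" D] by simp
  have "D * s \<le> x * s" using xD assms(1) by (intro mult_right_mono) auto
  moreover have "D * 1 < D * (2 * s)" using assms(1,3) by (intro mult_strict_left_mono) auto
  ultimately show False using a by simp
qed

lemma spanner:
  fixes P :: "'a::euclidean_space set"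
  assumes fin: "finite P" and s: "s > 1" and ein: "edges_in P E"
    and cov: "\<forall>p\<in>P. \<forall>q\<in>P. p \<noteq> q \<longrightarrow> {p,q} \<in> E \<or> covered s E p q"
  shows "p \<in> P \<Longrightarrow> q \<in> P \<Longrightarrow> \<exists>xs. is_walk E xs p q \<and> walk_length xs \<le> (s + 1) / (s - 1) * dist p q"
proof (induction "card {(x,y) \<in> P \<times> P. dist x y < dist p q}" arbitrary: p q rule: less_induct)
  case less
  define t where "t = (s + 1) / (s - 1)"
  have t1: "t \<ge> 1" using s unfolding t_def by (simp add: field_simps)
  define D where "D = dist p q"
  have IH: "\<exists>xs. is_walk E xs x y \<and> walk_length xs \<le> t * dist x y"
    if "x \<in> P" "y \<in> P" "dist x y < D" for x y
  proof -
    have sub: "{(u,v) \<in> P \<times> P. dist u v < dist x y} \<subset> {(u,v) \<in> P \<times> P. dist u v < dist p q}"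
      using that unfolding D_def by auto
    have "card {(u,v) \<in> P \<times> P. dist u v < dist x y} < card {(u,v) \<in> P \<times> P. dist u v < dist p q}"
      by (rule psubset_card_mono[OF _ sub]) (rule finite_subset[of _ "P \<times> P"], auto simp: fin)
    then show ?thesis using less.hyps that unfolding t_def by blast
  qed
  show ?case
  proof (cases "p = q")
    case True then show ?thesis using walk_single(1)[of E p] walk_single(2)[of p] by (intro exI[of _ "[p]"]) simp
  next
    case False
    have D0: "D > 0" using False unfolding D_def by simp
    from cov less.prems False have "{p,q} \<in> E \<or> covered s E p q" by blast
    then show ?thesis
    proof
      assume "{p,q} \<in> E"
      then show ?thesis using walk_edge(1)[of p q E] walk_edge(2)[of p q] t1 D0 unfolding D_def t_def[symmetric]
        by (intro exI[of _ "[p,q]"]) (auto simp: mult_le_cancel_right1)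
    next
      assume "covered s E p q"
      then obtain p' q' where e: "{p',q'} \<in> E" and d1: "dist p p' \<le> dist p' q' / (2 * s + 2)"
        and d2: "dist q q' \<le> dist p' q' / (2 * s + 2)" unfolding covered_def by blast
      have pP: "p' \<in> P" "q' \<in> P" using e ein unfolding edges_in_def
        by (metis doubleton_eq_iff)+
      define L where "L = dist p' q'"
      have tri: "L \<le> dist p p' + D + dist q q'"
        proof -
        have "dist p' q' \<le> dist p' p + dist p q'" by (rule dist_triangle)
        moreover have "dist p q' \<le> dist p q + dist q q'" by (rule dist_triangle)
        ultimately show ?thesis unfolding L_def D_def by (simp add: dist_commute)
      qed
      have c0: "2 * s + 2 > 0" using s by simp
      have LD: "L * s \<le> D * (s + 1)"
      proof -
        have "L \<le> L / (2 * s + 2) + D + L / (2 * s + 2)" using tri d1 d2 unfolding L_def by linarith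
        then have "L * (2 * s + 2) \<le> (L / (2 * s + 2) + D + L / (2 * s + 2)) * (2 * s + 2)"
          using c0 by (simp add: mult_right_mono)
        also have "\<dots> = L / (2 * s + 2) * (2 * s + 2) + D * (2 * s + 2) + L / (2 * s + 2) * (2 * s + 2)"
          by (simp only: distrib_right)
        also have "\<dots> = 2 * L + D * (2 * s + 2)" using c0 by simp
        finally show ?thesis by (simp add: algebra_simps)
      qed
      have Lnn: "L \<ge> 0" unfolding L_def by simp
      have dp: "dist p p' < D"
        by (rule arith1[OF s zero_le_dist D0 _ LD]) (use d1 c0 in \<open>simp add: L_def field_simps\<close>)
      have dq: "dist q' q < D"
        by (rule arith1[OF s zero_le_dist D0 _ LD]) (use d2 c0 in \<open>simp add: L_def field_simps dist_commute\<close>)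
      obtain W1 where W1: "is_walk E W1 p p'" "walk_length W1 \<le> t * dist p p'"
        using IH[OF less.prems(1) pP(1) dp] by blast
      obtain W2 where W2: "is_walk E W2 q' q" "walk_length W2 \<le> t * dist q' q"
        using IH[OF pP(2) less.prems(2) dq] by blast
      have W: "is_walk E (W1 @ W2) p q \<and> walk_length (W1 @ W2) = walk_length W1 + L + walk_length W2"
        using walk_append[OF W1(1) W2(1) e] unfolding L_def by simp
      have "walk_length (W1 @ W2) \<le> t * dist p p' + L + t * dist q q'"
        using W W1 W2 by (simp add: dist_commute)
      also have "\<dots> \<le> t * D"
      proof -
        have a: "t * dist p p' \<le> t * (L / (2 * s + 2))" using d1 t1 unfolding L_def by (intro mult_left_mono) auto
        have b: "t * dist q q' \<le> t * (L / (2 * s + 2))" using d2 t1 unfolding L_def by (intro mult_left_mono) auto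
        have "t * (L / (2 * s + 2)) + L + t * (L / (2 * s + 2)) = L * s / (s - 1)"
        proof -
          have e1: "t * (L / (2 * s + 2)) = L / (2 * (s - 1))"
          proof -
            have "2 * s + 2 = 2 * (s + 1)" by simp
            then have "t * (L / (2 * s + 2)) = ((s + 1) / (s - 1)) * (L / (2 * (s + 1)))" unfolding t_def by simp
            also have "\<dots> = L / (2 * (s - 1))"
            proof -
              have "s * s > 1 * 1" using s by (intro mult_strict_mono) auto
              then have "s * (s * 2) - 2 \<noteq> 0" by simp
              then show ?thesis using s by (simp add: field_simps)
            qed
            finally show ?thesis .
          qed
          have gen: "x / (2 * a) + x + x / (2 * a) = x * (a + 1) / a" if "a > 0" for a x :: real
            using that by (simp add: field_simps)
          have "L / (2 * (s - 1)) + L + L / (2 * (s - 1)) = L * s / (s - 1)"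
            using gen[of "s - 1" L] s by simp
          then show ?thesis using e1 by simp
        qed
        also have "\<dots> \<le> D * (s + 1) / (s - 1)" using LD s by (simp add: divide_right_mono)
        also have "\<dots> = t * D" unfolding t_def by simp
        finally show ?thesis using a b by linarith
      qed
      finally show ?thesis using W unfolding D_def t_def by blast
    qed
  qed
qed



definition sc :: "int \<Rightarrow> real" where "sc k = 2 powr real_of_int k"

definition idx :: "int \<Rightarrow> 'a::euclidean_space \<Rightarrow> 'a \<Rightarrow> int" where
  "idx k x = (\<lambda>b. if b \<in> Basis then \<lfloor>(x \<bullet> b) / sc k\<rfloor> else 0)"

definition cp :: "'a::euclidean_space set \<Rightarrow> int \<Rightarrow> 'a \<Rightarrow> 'a set" where
  "cp P k x = {y \<in> P. idx k y = idx k x}"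

definition rep :: "('a::euclidean_space \<Rightarrow> nat) \<Rightarrow> 'a set \<Rightarrow> int \<Rightarrow> 'a \<Rightarrow> 'a" where
  "rep f P k x = inv_into P f (Min (f ` cp P k x))"

lemma sc_pos: "sc k > 0" by (simp add: sc_def)

lemma sc_succ: "sc (k + 1) = 2 * sc k"
  by (simp add: sc_def powr_add)

lemma sc_mono: "k \<le> k' \<Longrightarrow> sc k \<le> sc k'"
  by (simp add: sc_def)

lemma idx_succ:
  assumes "idx k x = idx k y" shows "idx (k + 1) x = idx (k + 1) y"
proof
  fix b
  have h: "\<lfloor>t / sc (k + 1)\<rfloor> = \<lfloor>t / sc k\<rfloor> div 2" for t
  proof -
    have e: "t / sc (k + 1) = (t / sc k) / real_of_int 2" by (simp add: sc_succ)
    show ?thesis unfolding e by (rule floor_divide_real_eq_div) simp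
  qed
  show "idx (k + 1) x b = idx (k + 1) y b"
    using fun_cong[OF assms, of b] unfolding idx_def h by (auto split: if_splits)
qed

lemma idx_mono:
  assumes "k \<le> k'" "idx k x = idx k y" shows "idx k' x = idx k' y"
proof -
  obtain n where n: "k' = k + int n" using assms(1) by (auto simp: zle_iff_zadd)
  have "idx (k + int n) x = idx (k + int n) y" for n
  proof (induction n)
    case 0 then show ?case using assms(2) by simp
  next
    case (Suc n)
    have e: "k + int (Suc n) = (k + int n) + 1" by simp
    show ?case unfolding e by (rule idx_succ[OF Suc.IH])
  qed
  then show ?thesis using n by simp
qed

lemma cp_sub: "cp P k x \<subseteq> P" by (auto simp: cp_def)
lemma cp_refl: "x \<in> P \<Longrightarrow> x \<in> cp P k x" by (auto simp: cp_def)
lemma cp_eq: "y \<in> cp P k x \<Longrightarrow> cp P k y = cp P k x" by (auto simp: cp_def)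
lemma cp_mono: "k \<le> k' \<Longrightarrow> cp P k x \<subseteq> cp P k' x"
  by (auto simp: cp_def intro: idx_mono)
lemma cp_idx: "y \<in> cp P k x \<Longrightarrow> idx k y = idx k x" by (auto simp: cp_def)

lemma idx_dist:
  fixes x y :: "'a::euclidean_space"
  assumes "idx k x = idx k y" shows "dist x y \<le> real DIM('a) * sc k"
proof -
  have bnd: "\<bar>(x - y) \<bullet> b\<bar> \<le> sc k" if b: "b \<in> Basis" for b
  proof -
    define u where "u = (x \<bullet> b) / sc k"
    define v where "v = (y \<bullet> b) / sc k"
    have fl: "\<lfloor>u\<rfloor> = \<lfloor>v\<rfloor>" using fun_cong[OF assms, of b] b unfolding u_def v_def idx_def by simp
    have "of_int \<lfloor>u\<rfloor> \<le> u \<and> u < of_int (\<lfloor>u\<rfloor> + 1)" by (rule floor_correct)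
    moreover have "of_int \<lfloor>v\<rfloor> \<le> v \<and> v < of_int (\<lfloor>v\<rfloor> + 1)" by (rule floor_correct)
    ultimately have uv: "\<bar>u - v\<bar> < 1" using fl by linarith
    have "u - v = ((x - y) \<bullet> b) / sc k" unfolding u_def v_def by (simp add: inner_diff_left diff_divide_distrib)
    then have "\<bar>(x - y) \<bullet> b\<bar> = \<bar>u - v\<bar> * sc k" using sc_pos[of k] by (simp add: abs_mult)
    also have "\<dots> \<le> 1 * sc k" using uv sc_pos[of k] by (intro mult_right_mono) auto
    finally show ?thesis by simp
  qed
  have "norm (x - y) \<le> (\<Sum>b\<in>Basis. \<bar>(x - y) \<bullet> b\<bar>)" by (rule norm_le_l1)
  also have "\<dots> \<le> (\<Sum>b\<in>(Basis::'a set). sc k)" by (rule sum_mono) (rule bnd)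
  also have "\<dots> = real DIM('a) * sc k" by simp
  finally show ?thesis by (simp add: dist_norm)
qed

lemma inv_min:
  assumes "finite S" "S \<noteq> {}" "S \<subseteq> P" "inj_on f P"
  shows "inv_into P f (Min (f ` S)) \<in> S \<and> (\<forall>y\<in>S. f (inv_into P f (Min (f ` S))) \<le> f y)"
proof -
  have "Min (f ` S) \<in> f ` S" using assms by simp
  then obtain z where z: "z \<in> S" "f z = Min (f ` S)" by auto
  have zP: "z \<in> P" using z(1) assms(3) by blast
  have "inv_into P f (Min (f ` S)) = z" unfolding z(2)[symmetric] by (rule inv_into_f_f[OF assms(4) zP])
  then show ?thesis using z assms(1) by (simp add: Min_le)
qed

context
  fixes f :: "'a::euclidean_space \<Rightarrow> nat" and P :: "'a set"
  assumes finP: "finite P" and injf: "inj_on f P"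
begin

lemma rep_props:
  assumes "x \<in> P"
  shows "rep f P k x \<in> cp P k x" "\<And>y. y \<in> cp P k x \<Longrightarrow> f (rep f P k x) \<le> f y"
proof -
  have fin: "finite (cp P k x)" by (rule finite_subset[OF cp_sub finP])
  have ne: "cp P k x \<noteq> {}" using cp_refl[OF assms] by blast
  note m = inv_min[OF fin ne cp_sub injf]
  show "rep f P k x \<in> cp P k x" using m by (simp add: rep_def)
  show "\<And>y. y \<in> cp P k x \<Longrightarrow> f (rep f P k x) \<le> f y" using m by (simp add: rep_def)
qed

lemma rep_P: "x \<in> P \<Longrightarrow> rep f P k x \<in> P"
  using rep_props(1)[of x k] cp_sub[of P k x] by (rule subsetD[rotated])

lemma rep_cong: "cp P k x = cp P k y \<Longrightarrow> rep f P k x = rep f P k y"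
  by (simp add: rep_def)

lemma rep_cp: "x \<in> P \<Longrightarrow> cp P k (rep f P k x) = cp P k x"
  by (rule cp_eq[OF rep_props(1)])

lemma rep_self: "x \<in> P \<Longrightarrow> rep f P k (rep f P k x) = rep f P k x"
  by (rule rep_cong[OF rep_cp])

lemma rep_mono: "x \<in> P \<Longrightarrow> k \<le> k' \<Longrightarrow> f (rep f P k' x) \<le> f (rep f P k x)"
  by (rule rep_props(2)) (use rep_props(1)[of x k] cp_mono[of k k' P x] in auto)

lemma rep_eq_idx: "x \<in> P \<Longrightarrow> y \<in> P \<Longrightarrow> rep f P k x = rep f P k y \<Longrightarrow> idx k x = idx k y"
proof -
  assume a: "x \<in> P" "y \<in> P" "rep f P k x = rep f P k y"
  have "cp P k x = cp P k y" using rep_cp[OF a(1), of k] rep_cp[OF a(2), of k] a(3) by simp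
  then show ?thesis using cp_refl[OF a(2), of k] cp_idx[of y P k x] by simp
qed

lemma level_lt:
  assumes z: "z \<in> P" "rep f P k z = z" "rep f P (k + 1) z \<noteq> z" "rep f P k' z = z" "k < k'"
  shows False
proof -
  have "f (rep f P k' z) \<le> f (rep f P (k + 1) z)" using rep_mono[of z "k+1" k'] z by simp
  moreover have "f (rep f P (k + 1) z) \<le> f (rep f P k z)" using rep_mono[of z k "k+1"] z by simp
  ultimately have "f (rep f P (k + 1) z) = f z" using z by simp
  then have "rep f P (k + 1) z = z" using inj_onD[OF injf _ rep_P[OF z(1)] z(1)] by blast
  then show False using z by simp
qed

lemma level_uniq:
  assumes "z \<in> P" "rep f P k z = z" "rep f P (k + 1) z \<noteq> z" "rep f P k' z = z" "rep f P (k' + 1) z \<noteq> z"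
  shows "k = k'"
  using level_lt[of z k k'] level_lt[of z k' k] assms by fastforce

lemma witness_A:
  assumes "x \<in> P" "rep f P k x \<noteq> rep f P (k + 1) x"
  shows "rep f P k (rep f P k x) = rep f P k x \<and> rep f P (k + 1) (rep f P k x) \<noteq> rep f P k x
     \<and> rep f P (k + 1) (rep f P k x) = rep f P (k + 1) x"
proof -
  let ?z = "rep f P k x"
  have zin: "?z \<in> cp P k x" using rep_props(1)[OF assms(1)] .
  have "?z \<in> cp P (k + 1) x" using zin cp_mono[of k "k+1" P x] by auto
  then have "cp P (k + 1) ?z = cp P (k + 1) x" by (rule cp_eq)
  then have "rep f P (k + 1) ?z = rep f P (k + 1) x" by (rule rep_cong)
  then show ?thesis using rep_self[OF assms(1)] assms(2) by simp
qed

lemma witness_B: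
  assumes "x \<in> P" "y \<in> cp P (k + 1) x" "y \<notin> cp P k x" "rep f P k x = rep f P (k + 1) x"
  shows "rep f P k (rep f P k y) = rep f P k y \<and> rep f P (k + 1) (rep f P k y) \<noteq> rep f P k y
     \<and> rep f P (k + 1) (rep f P k y) = rep f P (k + 1) x"
proof -
  have yP: "y \<in> P" using assms(2) cp_sub by blast
  let ?z = "rep f P k y"
  have zin: "?z \<in> cp P k y" using rep_props(1)[OF yP] .
  have "?z \<in> cp P (k + 1) y" using zin cp_mono[of k "k+1" P y] by auto
  moreover have "cp P (k + 1) y = cp P (k + 1) x" using assms(2) by (rule cp_eq)
  ultimately have "cp P (k + 1) ?z = cp P (k + 1) x" using cp_eq by blast
  then have r1: "rep f P (k + 1) ?z = rep f P (k + 1) x" by (rule rep_cong)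
  have ne: "rep f P (k + 1) ?z \<noteq> ?z"
  proof
    assume "rep f P (k + 1) ?z = ?z"
    then have "?z = rep f P k x" using r1 assms(4) by simp
    then have "?z \<in> cp P k x" using rep_props(1)[OF assms(1)] by simp
    then have "cp P k ?z = cp P k x" by (rule cp_eq)
    moreover have "cp P k ?z = cp P k y" using zin by (rule cp_eq)
    ultimately show False using assms(3) cp_refl[OF yP] by blast
  qed
  show ?thesis using rep_self[OF yP] ne r1 by simp
qed

end



lemma lev_facts:
  fixes D A :: real
  assumes "D > 0" "A > 0"
  defines "k \<equiv> \<lfloor>log 2 (D / A)\<rfloor>"
  shows "A * sc k \<le> D" "D < 2 * A * sc k"
proof -
  have a: "D / A > 0" using assms by simp
  have "sc k = 2 powr real_of_int k" by (simp add: sc_def)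
  also have "\<dots> \<le> 2 powr (log 2 (D / A))" unfolding k_def by (intro powr_mono) auto
  also have "\<dots> = D / A" using a by simp
  finally have "sc k \<le> D / A" .
  then show "A * sc k \<le> D" using assms by (simp add: field_simps)
  have "log 2 (D / A) < real_of_int k + 1" unfolding k_def by linarith
  then have "2 powr (log 2 (D / A)) < 2 powr (real_of_int k + 1)" by (intro powr_less_mono) auto
  then have "D / A < 2 * sc k" using a by (simp add: sc_def powr_add)
  then show "D < 2 * A * sc k" using assms by (simp add: field_simps)
qed

lemma floor_diff_bound:
  fixes u v :: real
  shows "\<bar>\<lfloor>u\<rfloor> - \<lfloor>v\<rfloor>\<bar> < \<bar>u - v\<bar> + 1"
proof -
  have "of_int \<lfloor>u\<rfloor> \<le> u \<and> u < of_int (\<lfloor>u\<rfloor> + 1)" by (rule floor_correct)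
  moreover have "of_int \<lfloor>v\<rfloor> \<le> v \<and> v < of_int (\<lfloor>v\<rfloor> + 1)" by (rule floor_correct)
  ultimately show ?thesis by linarith
qed

lemma count_edges:
  fixes P :: "'a::euclidean_space set"
  assumes finP: "finite P" and s: "s > 1" and ein: "edges_in P E" and gd: "good s E"
  shows "real (card E) \<le> 6 * (16 * real DIM('a) + 5) ^ DIM('a) * real (card P) * s ^ DIM('a)"
proof (cases "E = {}")
  case True then show ?thesis using s by simp
next
  case Ene: False
  have finE: "finite E"
  proof (rule finite_subset)
    show "E \<subseteq> (\<lambda>(a,b). {a,b}) ` (P \<times> P)"
    proof
      fix e assume "e \<in> E"
      then obtain p q where pq: "e = {p,q}" "p \<in> P" "q \<in> P" using ein unfolding edges_in_def by blast
      show "e \<in> (\<lambda>(a,b). {a,b}) ` (P \<times> P)" by (rule image_eqI[of _ _ "(p,q)"]) (use pq in auto)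
    qed
    show "finite ((\<lambda>(a,b). {a,b}) ` (P \<times> P))" using finP by simp
  qed
  obtain f :: "'a \<Rightarrow> nat" where injf: "inj_on f P" using finite_imp_inj_to_nat_seg[OF finP] by blast
  define c where "c = 2 * s + 2"
  have c0: "c > 0" using s unfolding c_def by simp
  define dd where "dd = real DIM('a)"
  have dd1: "dd \<ge> 1" unfolding dd_def using DIM_positive[where 'a='a] by linarith
  have "\<forall>e\<in>E. \<exists>pq. e = {fst pq, snd pq} \<and> fst pq \<in> P \<and> snd pq \<in> P \<and> fst pq \<noteq> snd pq"
  proof
    fix e assume "e \<in> E"
    then obtain p q where "e = {p,q}" "p \<in> P" "q \<in> P" "p \<noteq> q" using ein unfolding edges_in_def by blast
    then show "\<exists>pq. e = {fst pq, snd pq} \<and> fst pq \<in> P \<and> snd pq \<in> P \<and> fst pq \<noteq> snd pq"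
      by (intro exI[of _ "(p,q)"]) simp
  qed
  then obtain ends where endsE: "\<forall>e\<in>E. e = {fst (ends e), snd (ends e)} \<and> fst (ends e) \<in> P \<and> snd (ends e) \<in> P \<and> fst (ends e) \<noteq> snd (ends e)"
    by (rule bchoice[elim_format]) blast
  define pp where "pp e = fst (ends e)" for e
  define qq where "qq e = snd (ends e)" for e
  have ends: "e = {pp e, qq e} \<and> pp e \<in> P \<and> qq e \<in> P \<and> pp e \<noteq> qq e" if "e \<in> E" for e
    using endsE that unfolding pp_def qq_def by blast
  define lev where "lev e = \<lfloor>log 2 (dist (pp e) (qq e) / (dd * c))\<rfloor>" for e
  have levf: "dd * c * sc (lev e) \<le> dist (pp e) (qq e)" "dist (pp e) (qq e) < 2 * (dd * c) * sc (lev e)"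
    if "e \<in> E" for e
  proof -
    have "dist (pp e) (qq e) > 0" using ends[OF that] by simp
    moreover have "dd * c > 0" using dd1 c0 by simp
    ultimately show "dd * c * sc (lev e) \<le> dist (pp e) (qq e)" "dist (pp e) (qq e) < 2 * (dd * c) * sc (lev e)"
      using lev_facts[of "dist (pp e) (qq e)" "dd * c"] unfolding lev_def by auto
  qed
  define K0 where "K0 = Max (lev ` E)"
  have levK: "lev e \<le> K0" if "e \<in> E" for e unfolding K0_def using finE that by simp
  define HS where "HS x k = {k'. k \<le> k' \<and> k' \<le> K0 \<and> cp P k' x = cp P k x}" for x k
  define hi where "hi x k = Max (HS x k)" for x k
  have hif: "k \<le> hi x k \<and> hi x k \<le> K0 \<and> cp P (hi x k) x = cp P k x
      \<and> (hi x k < K0 \<longrightarrow> cp P (hi x k + 1) x \<noteq> cp P (hi x k) x)" if "k \<le> K0" for x k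
  proof -
    have fin: "finite (HS x k)" by (rule finite_subset[of _ "{k..K0}"]) (auto simp: HS_def)
    have kin: "k \<in> HS x k" using that by (simp add: HS_def)
    have mem: "hi x k \<in> HS x k" unfolding hi_def using fin kin by (intro Max_in) auto
    have ge: "k' \<le> hi x k" if "k' \<in> HS x k" for k' unfolding hi_def using fin that by simp
    have trm: "cp P (hi x k + 1) x \<noteq> cp P (hi x k) x" if lt: "hi x k < K0"
    proof
      assume eq: "cp P (hi x k + 1) x = cp P (hi x k) x"
      have "hi x k + 1 \<in> HS x k" using mem lt eq unfolding HS_def by auto
      then show False using ge[of "hi x k + 1"] by simp
    qed
    show ?thesis using mem trm unfolding HS_def by auto
  qed
  have cp_between: "cp P H x = cp P k x" if "k \<le> H" "H \<le> hi x k" "k \<le> K0" for x k H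
  proof -
    have "cp P k x \<subseteq> cp P H x" using that(1) by (rule cp_mono)
    moreover have "cp P H x \<subseteq> cp P (hi x k) x" using that(2) by (rule cp_mono)
    ultimately show ?thesis using hif[OF that(3)] by blast
  qed
  define side where "side e = (hi (pp e) (lev e) \<le> hi (qq e) (lev e))" for e
  define xt where "xt e = (if side e then pp e else qq e)" for e
  define yt where "yt e = (if side e then qq e else pp e)" for e
  define H where "H e = hi (xt e) (lev e)" for e
  have Hle: "H e \<le> hi (pp e) (lev e)" "H e \<le> hi (qq e) (lev e)" for e
    unfolding H_def xt_def side_def by auto
  have xtP: "xt e \<in> P" "yt e \<in> P" if "e \<in> E" for e
    using ends[OF that] unfolding xt_def yt_def by auto
  have Hf: "lev e \<le> H e \<and> H e \<le> K0 \<and> (H e < K0 \<longrightarrow> cp P (H e + 1) (xt e) \<noteq> cp P (H e) (xt e))"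
    if "e \<in> E" for e
  proof -
    note h = hif[OF levK[OF that], of "xt e"]
    show ?thesis unfolding H_def using h by blast
  qed
  define rp where "rp = rep f P"
  define y0 where "y0 e = inv_into P f (Min (f ` (cp P (H e + 1) (xt e) - cp P (H e) (xt e))))" for e
  have y0f: "y0 e \<in> cp P (H e + 1) (xt e) \<and> y0 e \<notin> cp P (H e) (xt e)" if "e \<in> E" "H e < K0" for e
  proof -
    let ?S = "cp P (H e + 1) (xt e) - cp P (H e) (xt e)"
    have "cp P (H e) (xt e) \<subseteq> cp P (H e + 1) (xt e)" by (rule cp_mono) simp
    then have ne: "?S \<noteq> {}" using Hf[OF that(1)] that(2) by blast
    have fin: "finite ?S" by (rule finite_subset[OF _ finP]) (use cp_sub in blast)
    have sub: "?S \<subseteq> P" using cp_sub by blast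
    show ?thesis using inv_min[OF fin ne sub injf] unfolding y0_def by blast
  qed
  define flag where "flag e = (if H e = K0 then 0 else if rp (H e) (xt e) \<noteq> rp (H e + 1) (xt e) then 1 else (2::nat))" for e
  define z where "z e = (if H e = K0 then rp K0 (xt e) else if rp (H e) (xt e) \<noteq> rp (H e + 1) (xt e)
      then rp (H e) (xt e) else rp (H e) (y0 e))" for e
  define M where "M = \<lceil>2 * dd * c\<rceil> + 1"
  define off where "off e = restrict (\<lambda>b. idx (H e) (yt e) b - idx (H e) (xt e) b) Basis" for e
  define G where "G e = (z e, flag e, side e, off e)" for e
  define Box where "Box = PiE (Basis::'a set) (\<lambda>_. {-M..M})"
  define T where "T = P \<times> {0::nat,1,2} \<times> (UNIV::bool set) \<times> Box"
  have decode: "H e = H e' \<and> idx (H e) (xt e) = idx (H e') (xt e')"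
    if ee: "e \<in> E" "e' \<in> E" and zz: "z e = z e'" and ff: "flag e = flag e'" for e e'
  proof -
    have P1: "xt e \<in> P" "xt e' \<in> P" using xtP ee by auto
    consider "H e = K0" "H e' = K0"
      | "H e < K0" "H e' < K0" "rp (H e) (xt e) \<noteq> rp (H e + 1) (xt e)" "rp (H e') (xt e') \<noteq> rp (H e' + 1) (xt e')"
      | "H e < K0" "H e' < K0" "rp (H e) (xt e) = rp (H e + 1) (xt e)" "rp (H e') (xt e') = rp (H e' + 1) (xt e')"
      using ff Hf[OF ee(1)] Hf[OF ee(2)] unfolding flag_def by (auto split: if_splits)
    then show ?thesis
    proof cases
      case 1
      then have "rp K0 (xt e) = rp K0 (xt e')" using zz unfolding z_def by simp
      then show ?thesis using rep_eq_idx[OF finP injf P1] 1 unfolding rp_def by simp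
    next
      case 2
      have z1: "z e = rp (H e) (xt e)" "z e' = rp (H e') (xt e')" using 2 unfolding z_def by auto
      note wA = witness_A[OF finP injf P1(1) 2(3)[unfolded rp_def]] witness_A[OF finP injf P1(2) 2(4)[unfolded rp_def]]
      have zP: "z e \<in> P" using z1 rep_P[OF finP injf P1(1)] unfolding rp_def by simp
      have a12: "rep f P (H e) (z e) = z e \<and> rep f P (H e + 1) (z e) \<noteq> z e"
        using wA(1) unfolding z1(1) rp_def by blast
      have a34: "rep f P (H e') (z e) = z e \<and> rep f P (H e' + 1) (z e) \<noteq> z e"
        using wA(2) unfolding zz z1(2) rp_def by blast
      have HH: "H e = H e'"
        using level_uniq[OF finP injf zP, of "H e" "H e'"] a12 a34 by blast
      then show ?thesis using rep_eq_idx[OF finP injf P1] z1 zz unfolding rp_def by simp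
    next
      case 3
      have z1: "z e = rp (H e) (y0 e)" "z e' = rp (H e') (y0 e')" using 3 unfolding z_def by auto
      have y1: "y0 e \<in> cp P (H e + 1) (xt e)" "y0 e \<notin> cp P (H e) (xt e)" using y0f[OF ee(1) 3(1)] by auto
      have y2: "y0 e' \<in> cp P (H e' + 1) (xt e')" "y0 e' \<notin> cp P (H e') (xt e')" using y0f[OF ee(2) 3(2)] by auto
      note wB1 = witness_B[OF finP injf P1(1) y1 3(3)[unfolded rp_def]]
      note wB2 = witness_B[OF finP injf P1(2) y2 3(4)[unfolded rp_def]]
      have y0P: "y0 e \<in> P" using y1(1) cp_sub by blast
      have zP: "z e \<in> P" using z1 rep_P[OF finP injf y0P] unfolding rp_def by simp
      have a12: "rep f P (H e) (z e) = z e \<and> rep f P (H e + 1) (z e) \<noteq> z e"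
        using wB1 unfolding z1(1) rp_def by blast
      have a34: "rep f P (H e') (z e) = z e \<and> rep f P (H e' + 1) (z e) \<noteq> z e"
        using wB2 unfolding zz z1(2) rp_def by blast
      have HH: "H e = H e'"
        using level_uniq[OF finP injf zP, of "H e" "H e'"] a12 a34 by blast
      have b1: "rep f P (H e + 1) (z e) = rep f P (H e + 1) (xt e)"
        using wB1 unfolding z1(1) rp_def by blast
      have b2: "rep f P (H e' + 1) (z e) = rep f P (H e' + 1) (xt e')"
        using wB2 unfolding zz z1(2) rp_def by blast
      have "rp (H e + 1) (xt e) = rp (H e + 1) (xt e')"
        using b1 b2 HH unfolding rp_def by simp
      then have "rp (H e) (xt e) = rp (H e) (xt e')" using 3 HH by simp
      then show ?thesis using rep_eq_idx[OF finP injf P1] HH unfolding rp_def by simp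
    qed
  qed
  have triple: "e = e'" if ee: "e \<in> E" "e' \<in> E" and HH: "H e = H e'"
    and i1: "idx (H e) (pp e) = idx (H e) (pp e')" and i2: "idx (H e) (qq e) = idx (H e) (qq e')" for e e'
  proof (rule ccontr)
    assume ne: "e \<noteq> e'"
    have close: "dist u u' \<le> dist (pp e) (qq e) / c"
      if "u \<in> {pp e, qq e}" "u' \<in> P" "idx (H e) u = idx (H e) u'" "e \<in> E" for e u u'
    proof -
      have uP: "u \<in> P" using that ends by blast
      have "H e \<le> hi u (lev e)" using that(1) Hle by auto
      then have "cp P (H e) u = cp P (lev e) u" using Hf[OF that(4)] levK[OF that(4)] cp_between by blast
      moreover have "u' \<in> cp P (H e) u" using that(2,3) by (simp add: cp_def)
      ultimately have "idx (lev e) u = idx (lev e) u'" by (simp add: cp_def)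
      then have "dist u u' \<le> dd * sc (lev e)" using idx_dist unfolding dd_def by blast
      also have "\<dots> \<le> dist (pp e) (qq e) / c" using levf(1)[OF that(4)] c0
        by (simp add: field_simps)
      finally show ?thesis .
    qed
    have PP: "pp e \<in> P" "qq e \<in> P" "pp e' \<in> P" "qq e' \<in> P" using ends ee by auto
    have d1: "dist (pp e) (pp e') \<le> dist (pp e) (qq e) / c" using close[of "pp e" e "pp e'"] PP i1 ee by auto
    have d2: "dist (pp e) (pp e') \<le> dist (pp e') (qq e') / c"
      using close[of "pp e'" e' "pp e"] PP i1 ee HH by (auto simp: dist_commute)
    have d3: "dist (qq e) (qq e') \<le> dist (pp e) (qq e) / c" using close[of "qq e" e "qq e'"] PP i2 ee by auto
    have d4: "dist (qq e) (qq e') \<le> dist (pp e') (qq e') / c"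
      using close[of "qq e'" e' "qq e"] PP i2 ee HH by (auto simp: dist_commute)
    have mn: "x \<le> min a b / c" if "x \<le> a / c" "x \<le> b / c" for x a b
      using that by (simp add: min_def)
    have e1: "e = {pp e, qq e}" using ends[OF ee(1)] by (elim conjE)
    have e2: "e' = {pp e', qq e'}" using ends[OF ee(2)] by (elim conjE)
    have "{pp e, qq e} \<noteq> {pp e', qq e'}"
    proof
      assume h: "{pp e, qq e} = {pp e', qq e'}"
      have "e = e'" by (rule trans[OF e1 trans[OF h e2[symmetric]]])
      then show False using ne by simp
    qed
    moreover have "{pp e, qq e} \<in> E" "{pp e', qq e'} \<in> E" using ends ee by auto
    ultimately show False using gd mn[OF d1 d2] mn[OF d3 d4] unfolding good_def c_def by blast
  qed
  have injG: "inj_on G E"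
  proof (rule inj_onI)
    fix e e' assume ee: "e \<in> E" "e' \<in> E" and GG: "G e = G e'"
    have eqs: "z e = z e'" "flag e = flag e'" "side e = side e'" "off e = off e'" using GG unfolding G_def by auto
    from decode[OF ee eqs(1,2)] have HH: "H e = H e'" and ix: "idx (H e) (xt e) = idx (H e) (xt e')" by auto
    have iy: "idx (H e) (yt e) = idx (H e) (yt e')"
    proof
      fix b
      show "idx (H e) (yt e) b = idx (H e) (yt e') b"
      proof (cases "b \<in> Basis")
        case True
        have "off e b = off e' b" using eqs(4) by simp
        then have "idx (H e) (yt e) b - idx (H e) (xt e) b = idx (H e) (yt e') b - idx (H e) (xt e') b"
          using True HH unfolding off_def by simp
        then show ?thesis using fun_cong[OF ix, of b] by simp
      next
        case False then show ?thesis by (simp add: idx_def)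
      qed
    qed
    show "e = e'"
    proof (cases "side e")
      case True
      then have "side e'" using eqs(3) by simp
      then show ?thesis using triple[OF ee HH] ix iy True unfolding xt_def yt_def by simp
    next
      case False
      then have "\<not> side e'" using eqs(3) by simp
      then show ?thesis using triple[OF ee HH] ix iy False unfolding xt_def yt_def by simp
    qed
  qed
  have GT: "G ` E \<subseteq> T"
  proof
    fix g assume "g \<in> G ` E"
    then obtain e where ee: "e \<in> E" and g: "g = G e" by blast
    have zP: "z e \<in> P"
    proof -
      have "rp k (xt e) \<in> P" for k using rep_P[OF finP injf xtP(1)[OF ee]] unfolding rp_def by simp
      moreover have "rp k (y0 e) \<in> P" if "H e < K0" for k
        using rep_P[OF finP injf] y0f[OF ee that] cp_sub unfolding rp_def by blast
      ultimately show ?thesis unfolding z_def using Hf[OF ee] by auto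
    qed
    have fl: "flag e \<in> {0,1,2}" unfolding flag_def by auto
    have ob: "off e \<in> Box"
    proof -
      have "\<bar>idx (H e) (yt e) b - idx (H e) (xt e) b\<bar> \<le> M" if b: "b \<in> Basis" for b
      proof -
        define u where "u = (yt e \<bullet> b) / sc (H e)"
        define v where "v = (xt e \<bullet> b) / sc (H e)"
        have "\<bar>u - v\<bar> = \<bar>(yt e - xt e) \<bullet> b\<bar> / sc (H e)"
          using sc_pos[of "H e"] unfolding u_def v_def by (simp add: inner_diff_left diff_divide_distrib abs_div_pos)
        also have "\<dots> \<le> dist (pp e) (qq e) / sc (H e)"
        proof -
          have "\<bar>(yt e - xt e) \<bullet> b\<bar> \<le> norm (yt e - xt e)" using b by (rule Basis_le_norm)
          also have "\<dots> = dist (pp e) (qq e)" unfolding xt_def yt_def by (simp add: dist_norm norm_minus_commute)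
          finally show ?thesis using sc_pos[of "H e"] by (simp add: divide_right_mono)
        qed
        also have "\<dots> \<le> dist (pp e) (qq e) / sc (lev e)"
          using sc_mono[of "lev e" "H e"] Hf[OF ee] sc_pos[of "lev e"] by (intro divide_left_mono) auto
        also have "\<dots> < 2 * (dd * c)"
          using levf(2)[OF ee] sc_pos[of "lev e"] by (simp add: divide_less_eq)
        finally have uv: "\<bar>u - v\<bar> < 2 * (dd * c)" .
        have "\<bar>\<lfloor>u\<rfloor> - \<lfloor>v\<rfloor>\<bar> < \<bar>u - v\<bar> + 1" by (rule floor_diff_bound)
        moreover have "2 * (dd * c) \<le> real_of_int \<lceil>2 * dd * c\<rceil>"
          using le_of_int_ceiling[of "2 * dd * c"] by (simp add: mult.assoc)
        ultimately have "real_of_int \<bar>\<lfloor>u\<rfloor> - \<lfloor>v\<rfloor>\<bar> < real_of_int M" using uv unfolding M_def by simp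
        then show ?thesis using b unfolding idx_def u_def v_def by simp
      qed
      then have "\<forall>b\<in>Basis. idx (H e) (yt e) b - idx (H e) (xt e) b \<in> {-M..M}"
        by (metis abs_le_iff atLeastAtMost_iff minus_diff_eq neg_le_iff_le)
      then show ?thesis unfolding off_def Box_def by (auto simp: PiE_iff)
    qed
    show "g \<in> T" unfolding g G_def T_def using zP fl ob by auto
  qed
  have M1: "M \<ge> 1"
  proof -
    have "2 * dd * c > 0" using dd1 c0 by simp
    then have "0 < \<lceil>2 * dd * c\<rceil>" by (metis ceiling_le_zero not_le)
    then show ?thesis unfolding M_def by linarith
  qed
  have finBox: "finite Box" unfolding Box_def by (intro finite_PiE) auto
  have cardBox: "card Box = nat (2 * M + 1) ^ DIM('a)"
    unfolding Box_def by (simp add: card_PiE)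
  have finT: "finite T" unfolding T_def using finP finBox by simp
  have "card E \<le> card T" by (rule card_inj_on_le[OF injG GT finT])
  also have "card T = card P * 3 * 2 * nat (2 * M + 1) ^ DIM('a)"
    unfolding T_def using finP finBox cardBox by (simp add: card_cartesian_product)
  finally have cE0: "card E \<le> card P * 3 * 2 * nat (2 * M + 1) ^ DIM('a)" .
  have cE: "real (card E) \<le> real (card P) * 6 * real (nat (2 * M + 1)) ^ DIM('a)"
  proof -
    have "real (card E) \<le> real (card P * 3 * 2 * nat (2 * M + 1) ^ DIM('a))"
      using cE0 by (simp only: of_nat_le_iff)
    then show ?thesis by simp
  qed
  have "real (nat (2 * M + 1)) = real_of_int (2 * M + 1)" using M1 by simp
  also have "\<dots> \<le> (16 * dd + 5) * s"
  proof -
    have "real_of_int M \<le> 2 * dd * c + 2" unfolding M_def by linarith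
    then have "real_of_int (2 * M + 1) \<le> 4 * dd * c + 5" by simp
    also have "\<dots> = 8 * dd * s + 8 * dd + 5" unfolding c_def by (simp add: algebra_simps)
    also have "\<dots> \<le> (16 * dd + 5) * s"
    proof -
      have "8 * dd \<le> 8 * dd * s" using dd1 s by simp
      moreover have "5 \<le> 5 * s" using s by simp
      ultimately show ?thesis by (simp add: algebra_simps)
    qed
    finally show ?thesis .
  qed
  finally have "real (nat (2 * M + 1)) ^ DIM('a) \<le> ((16 * dd + 5) * s) ^ DIM('a)"
    by (intro power_mono) auto
  then have "real (card P) * 6 * real (nat (2 * M + 1)) ^ DIM('a) \<le> real (card P) * 6 * ((16 * dd + 5) * s) ^ DIM('a)"
    by (intro mult_left_mono) auto
  moreover have "real (card P) * 6 * ((16 * dd + 5) * s) ^ DIM('a) = 6 * (16 * dd + 5) ^ DIM('a) * real (card P) * s ^ DIM('a)"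
    by (simp add: power_mult_distrib)
  ultimately show ?thesis using cE unfolding dd_def by linarith
qed


theorem theorem9:
  "\<exists>C::real. \<forall>(P :: 'a::euclidean_space set) (s::real) pairs.
      finite P \<and> s > 1 \<and> valid_order P pairs \<longrightarrow>
        (\<forall>p\<in>P. \<forall>q\<in>P. \<exists>xs. is_walk (uncoordinated_graph s pairs) xs p q \<and>
            walk_length xs \<le> (s + 1) / (s - 1) * dist p q)
        \<and> real (card (uncoordinated_graph s pairs)) \<le> C * real (card P) * s ^ DIM('a)"
proof (intro exI[of _ "6 * (16 * real DIM('a) + 5) ^ DIM('a)"] allI impI)
  fix P :: "'a set" and s :: real and pairs
  assume h: "finite P \<and> s > 1 \<and> valid_order P pairs"
  then have finP: "finite P" and s: "s > 1" and vo: "valid_order P pairs" by auto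
  define E where "E = uncoordinated_graph s pairs"
  have E_def': "E = foldl (process_pair s) {} pairs" unfolding E_def uncoordinated_graph_def ..
  have sp: "set pairs = {(p, q). p \<in> P \<and> q \<in> P \<and> p \<noteq> q}" using vo unfolding valid_order_def by blast
  have pr: "\<forall>(p,q)\<in>set pairs. p \<in> P \<and> q \<in> P \<and> p \<noteq> q" using sp by auto
  have g0: "good s ({} :: 'a set set)" unfolding good_def by simp
  have e0: "edges_in P ({} :: 'a set set)" unfolding edges_in_def by simp
  have inv: "good s E \<and> edges_in P E" unfolding E_def' by (rule foldl_inv[OF g0 e0 s pr])
  have cov: "\<forall>p\<in>P. \<forall>q\<in>P. p \<noteq> q \<longrightarrow> {p,q} \<in> E \<or> covered s E p q"
  proof (intro ballI impI)
    fix p q assume "p \<in> P" "q \<in> P" "p \<noteq> q"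
    then have "(p,q) \<in> set pairs" using sp by simp
    then show "{p,q} \<in> E \<or> covered s E p q"
      using foldl_cov[of pairs s "{}"] unfolding E_def' by auto
  qed
  have A: "\<forall>p\<in>P. \<forall>q\<in>P. \<exists>xs. is_walk E xs p q \<and> walk_length xs \<le> (s + 1) / (s - 1) * dist p q"
    using spanner[OF finP s _ cov] inv by blast
  have B: "real (card E) \<le> 6 * (16 * real DIM('a) + 5) ^ DIM('a) * real (card P) * s ^ DIM('a)"
    using count_edges[OF finP s] inv by blast
  show "(\<forall>p\<in>P. \<forall>q\<in>P. \<exists>xs. is_walk (uncoordinated_graph s pairs) xs p q \<and>
            walk_length xs \<le> (s + 1) / (s - 1) * dist p q)
        \<and> real (card (uncoordinated_graph s pairs)) \<le> 6 * (16 * real DIM('a) + 5) ^ DIM('a) * real (card P) * s ^ DIM('a)"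
    using A B unfolding E_def by blast
qed

end
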